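(* Fix finite simple graphs $H_1,\dots,H_\ell$ and let $t(g)=(t_{H_1}(g),\dots,t_{H_\ell}(g))$. Let $\tau_0$ lie in the interior of the phase space $\Gamma=\{t(g): g\text{ a graphon}\}\subset\mathbb R^\ell$, and suppose the constrained entropy $s_\tau=\max\{\mathcal S(g): t(g)=\tau\}$ is differentiable (as a function of $\tau$) at $\tau_0$. If $g_0$ is a graphon with $t(g_0)=\tau_0$ and $\mathcal S(g_0)=s_{\tau_0}$, then the set $g_0^{-1}(\{0,1\})=\{(x,y): g_0(x,y)\in\{0,1\}\}$ has Lebesgue measure zero.
   Context: A graphon is a symmetric measurable function $g:[0,1]^2\to[0,1]$. For a finite simple graph $H$ with vertex set $\{1,\dots,m\}$ and edge set $E(H)$, its homomorphism density in $g$ is $t_H(g)=\int_{[0,1]^m}\prod_{\{i,j\}\in E(H)}g(x_i,x_j)\,dx_1\cdots dx_m$. The Shannon entropy is $\mathcal S(g)=\frac12\int_{[0,1]^2}S(g(x,y))\,dx\,dy$ with $S(w)=-w\ln w-(1-w)\ln(1-w)$ (and $0\ln0=0$). The maximum defining $s_\tau$ is attained for every $\tau\in\Gamma$. *)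

theory Defs
  imports "HOL-Analysis.Analysis"
begin

definition unitI :: "real measure" where
  "unitI = restrict_space lborel {0..1}"

text \<open>A graphon: a measurable symmetric function from the unit square to [0,1].
  Only the values on the unit square matter.\<close>
definition graphon :: "(real \<Rightarrow> real \<Rightarrow> real) \<Rightarrow> bool" where
  "graphon g \<longleftrightarrow>
     (\<lambda>(x, y). g x y) \<in> borel_measurable (restrict_space borel ({0..1} \<times> {0..1}))
   \<and> (\<forall>x\<in>{0..1}. \<forall>y\<in>{0..1}. g x y = g y x)
   \<and> (\<forall>x\<in>{0..1}. \<forall>y\<in>{0..1}. 0 \<le> g x y \<and> g x y \<le> 1)"

text \<open>A finite simple graph on vertex set {1..m}: a pair (m, E) where each edge
  {i,j} is recorded once as the pair (i,j) with i < j.\<close>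
type_synonym sgraph = "nat \<times> (nat \<times> nat) set"

definition simple_graph :: "sgraph \<Rightarrow> bool" where
  "simple_graph H \<longleftrightarrow> (\<forall>(i, j) \<in> snd H. 1 \<le> i \<and> i < j \<and> j \<le> fst H)"

definition hom_density :: "sgraph \<Rightarrow> (real \<Rightarrow> real \<Rightarrow> real) \<Rightarrow> real" where
  "hom_density H g =
     integral\<^sup>L (PiM {1..fst H} (\<lambda>_. unitI)) (\<lambda>x. \<Prod>(i, j) \<in> snd H. g (x i) (x j))"

text \<open>Binary entropy function S(w), with 0 ln 0 = 0 (note 0 * ln 0 = 0 in HOL).\<close>
definition bin_ent :: "real \<Rightarrow> real" where
  "bin_ent w = - w * ln w - (1 - w) * ln (1 - w)"

definition graphon_entropy :: "(real \<Rightarrow> real \<Rightarrow> real) \<Rightarrow> real" where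
  "graphon_entropy g = 1/2 * integral\<^sup>L (unitI \<Otimes>\<^sub>M unitI) (\<lambda>(x, y). bin_ent (g x y))"

definition dens_vec :: "('l::finite \<Rightarrow> sgraph) \<Rightarrow> (real \<Rightarrow> real \<Rightarrow> real) \<Rightarrow> real ^ 'l" where
  "dens_vec Hs g = (\<chi> k. hom_density (Hs k) g)"

definition phase_space :: "('l::finite \<Rightarrow> sgraph) \<Rightarrow> (real ^ 'l) set" where
  "phase_space Hs = {dens_vec Hs g | g. graphon g}"

text \<open>Constrained entropy s_tau (the supremum is a maximum for tau in Gamma).\<close>
definition constr_entropy :: "('l::finite \<Rightarrow> sgraph) \<Rightarrow> real ^ 'l \<Rightarrow> real" where
  "constr_entropy Hs \<tau> = Sup {graphon_entropy g | g. graphon g \<and> dens_vec Hs g = \<tau>}"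

end

theory Submission imports Defs "HOL-Probability.Probability" begin

lemma space_unitI[simp]: "space unitI = {0..1}"
  by (simp add: unitI_def)

lemma prob_unitI: "prob_space unitI"
  by (rule prob_spaceI) (simp add: unitI_def emeasure_restrict_space)

lemma meas_unitI_borel: "(\<lambda>x. x) \<in> measurable unitI borel"
  unfolding unitI_def by (rule measurable_restrict_space1) simp

lemma meas_M2_borel: "(\<lambda>p. p) \<in> measurable (unitI \<Otimes>\<^sub>M unitI) (borel :: (real \<times> real) measure)"
proof -
  have "(\<lambda>p. (fst p, snd p)) \<in> measurable (unitI \<Otimes>\<^sub>M unitI) (borel \<Otimes>\<^sub>M borel)"
    using meas_unitI_borel by (intro measurable_Pair) (auto intro: measurable_compose)
  then show ?thesis by (simp add: borel_prod)
qed

definition ext :: "(real \<Rightarrow> real \<Rightarrow> real) \<Rightarrow> real \<times> real \<Rightarrow> real" where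
  "ext g p = indicator ({0..1} \<times> {0..1}) p *\<^sub>R (case p of (x,y) \<Rightarrow> g x y)"

lemma ext_meas: "graphon g \<Longrightarrow> ext g \<in> borel_measurable borel"
  unfolding graphon_def ext_def
  by (subst (asm) borel_measurable_restrict_space_iff) (auto intro!: borel_closed closed_Times)

lemma meas_M2: assumes "graphon g" and f: "f \<in> borel_measurable borel"
  shows "(\<lambda>(x,y). f (g x y)) \<in> borel_measurable (unitI \<Otimes>\<^sub>M unitI)"
proof -
  have "(\<lambda>p. f (ext g p)) \<in> borel_measurable (unitI \<Otimes>\<^sub>M unitI)"
    using measurable_compose[OF meas_M2_borel measurable_compose[OF ext_meas[OF assms(1)] f]] .
  then show ?thesis
    by (rule measurable_cong[THEN iffD1, rotated])
       (auto simp: space_pair_measure ext_def)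
qed

lemma meas_Pi: assumes "graphon g" "i \<in> I" "j \<in> I"
  shows "(\<lambda>x. g (x i) (x j)) \<in> borel_measurable (PiM I (\<lambda>_. unitI))"
proof -
  have "(\<lambda>x. (x i, x j)) \<in> measurable (PiM I (\<lambda>_. unitI)) (unitI \<Otimes>\<^sub>M unitI)"
    using assms by (intro measurable_Pair) auto
  from measurable_compose[OF this meas_M2[OF assms(1), of "\<lambda>x. x"]]
  show ?thesis by simp
qed

lemma prod_diff:
  fixes a b :: "'a \<Rightarrow> real"
  assumes "finite E" "\<forall>e\<in>E. 0 \<le> a e \<and> a e \<le> 1 \<and> 0 \<le> b e \<and> b e \<le> 1"
  shows "\<bar>prod a E - prod b E\<bar> \<le> (\<Sum>e\<in>E. \<bar>a e - b e\<bar>)"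
  using assms
proof (induction E rule: finite_induct)
  case empty then show ?case by simp
next
  case (insert x F)
  let ?P = "prod a F" and ?Q = "prod b F"
  have P: "0 \<le> ?P" "?P \<le> 1" using insert by (auto intro: prod_nonneg prod_le_1)
  have ab: "0 \<le> a x" "a x \<le> 1" "0 \<le> b x" "b x \<le> 1" using insert by auto
  have IH: "\<bar>?P - ?Q\<bar> \<le> (\<Sum>e\<in>F. \<bar>a e - b e\<bar>)" using insert by auto
  have "a x * ?P - b x * ?Q = (a x - b x) * ?P + b x * (?P - ?Q)" by (simp add: algebra_simps)
  then have "\<bar>a x * ?P - b x * ?Q\<bar> \<le> \<bar>a x - b x\<bar> * \<bar>?P\<bar> + \<bar>b x\<bar> * \<bar>?P - ?Q\<bar>"
    by (metis abs_mult abs_triangle_ineq)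
  also have "\<dots> \<le> \<bar>a x - b x\<bar> + \<bar>?P - ?Q\<bar>"
    using P ab by (intro add_mono) (auto intro: mult_left_le mult_left_le_one_le)
  finally show ?case using insert IH by simp
qed

lemma finite_edges: "simple_graph H \<Longrightarrow> finite (snd H)"
  unfolding simple_graph_def
  by (rule finite_subset[of _ "{1..fst H} \<times> {1..fst H}"]) auto

lemma hom_lip:
  fixes e :: real
  assumes H: "simple_graph H" and g: "graphon g" and g': "graphon g'" and e: "0 \<le> e"
    and d: "\<forall>x\<in>{0..1}. \<forall>y\<in>{0..1}. \<bar>g x y - g' x y\<bar> \<le> e"
  shows "\<bar>hom_density H g - hom_density H g'\<bar> \<le> card (snd H) * e"
proof -
  let ?M = "PiM {1..fst H} (\<lambda>_. unitI)"
  interpret P: prob_space ?M by (intro prob_space_PiM prob_unitI)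
  have fin: "finite (snd H)" using finite_edges[OF H] .
  have Hij: "\<And>i j. (i,j) \<in> snd H \<Longrightarrow> i \<in> {1..fst H} \<and> j \<in> {1..fst H}"
    using H unfolding simple_graph_def by auto
  have sp: "\<And>x i. x \<in> space ?M \<Longrightarrow> i \<in> {1..fst H} \<Longrightarrow> x i \<in> {0..1}"
    by (auto simp: space_PiM)
  have bnd: "\<And>g x i j. graphon g \<Longrightarrow> x \<in> space ?M \<Longrightarrow> (i,j) \<in> snd H \<Longrightarrow> 0 \<le> g (x i) (x j) \<and> g (x i) (x j) \<le> 1"
    using sp Hij unfolding graphon_def by blast
  have meas: "\<And>g. graphon g \<Longrightarrow> (\<lambda>x. \<Prod>(i, j) \<in> snd H. g (x i) (x j)) \<in> borel_measurable ?M"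
    apply (rule borel_measurable_prod)
    subgoal for g p using Hij[of "fst p" "snd p"] meas_Pi[of g "fst p" "{1..fst H}" "snd p"]
      by (cases p) auto
    done
  have int: "\<And>g. graphon g \<Longrightarrow> integrable ?M (\<lambda>x. \<Prod>(i, j) \<in> snd H. g (x i) (x j))"
  proof -
    fix g assume g: "graphon g"
    show "integrable ?M (\<lambda>x. \<Prod>(i, j) \<in> snd H. g (x i) (x j))"
    proof (rule P.integrable_const_bound[where B=1])
      show "AE x in ?M. norm (\<Prod>(i, j) \<in> snd H. g (x i) (x j)) \<le> 1"
        using bnd[OF g] by (auto intro!: AE_I2 prod_le_1 prod_nonneg split: prod.splits simp: abs_prod)
    qed (rule meas[OF g])
  qed
  have pw: "\<And>x. x \<in> space ?M \<Longrightarrow>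
      \<bar>(\<Prod>(i, j) \<in> snd H. g (x i) (x j)) - (\<Prod>(i, j) \<in> snd H. g' (x i) (x j))\<bar> \<le> card (snd H) * e"
  proof -
    fix x assume x: "x \<in> space ?M"
    have "\<bar>(\<Prod>(i, j) \<in> snd H. g (x i) (x j)) - (\<Prod>(i, j) \<in> snd H. g' (x i) (x j))\<bar>
       \<le> (\<Sum>p\<in>snd H. \<bar>(case p of (i,j) \<Rightarrow> g (x i) (x j)) - (case p of (i,j) \<Rightarrow> g' (x i) (x j))\<bar>)"
      using bnd[OF g x] bnd[OF g' x] by (intro prod_diff fin) auto
    also have "\<dots> \<le> (\<Sum>p\<in>snd H. e)"
      using d sp[OF x] Hij by (intro sum_mono) (auto split: prod.splits)
    finally show "?thesis x" by simp
  qed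
  have "\<bar>hom_density H g - hom_density H g'\<bar>
      = \<bar>integral\<^sup>L ?M (\<lambda>x. (\<Prod>(i, j) \<in> snd H. g (x i) (x j)) - (\<Prod>(i, j) \<in> snd H. g' (x i) (x j)))\<bar>"
    unfolding hom_density_def using int[OF g] int[OF g'] by simp
  also have "\<dots> \<le> integral\<^sup>L ?M (\<lambda>x. \<bar>(\<Prod>(i, j) \<in> snd H. g (x i) (x j)) - (\<Prod>(i, j) \<in> snd H. g' (x i) (x j))\<bar>)"
    by (rule integral_abs_bound)
  also have "\<dots> \<le> integral\<^sup>L ?M (\<lambda>x. card (snd H) * e)"
    by (rule integral_mono[OF integrable_abs[OF Bochner_Integration.integrable_diff[OF int[OF g] int[OF g']]] P.integrable_const pw])
  also have "\<dots> = card (snd H) * e" using P.prob_space by simp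
  finally show ?thesis .
qed

lemma sets_M2_eq_space: "space (unitI \<Otimes>\<^sub>M unitI) = {0..1} \<times> {0..1}"
  by (simp add: space_pair_measure)

lemma emeas_link:
  assumes sub: "X \<subseteq> {0..1} \<times> {0..1}" and X: "X \<in> sets (borel :: (real \<times> real) measure)"
  shows "X \<in> sets (unitI \<Otimes>\<^sub>M unitI) \<and> emeasure (unitI \<Otimes>\<^sub>M unitI) X = emeasure lborel X"
proof -
  interpret U: prob_space unitI by (rule prob_unitI)
  have XS: "X \<in> sets (unitI \<Otimes>\<^sub>M unitI)"
    using measurable_sets[OF meas_M2_borel X] sub by (simp add: sets_M2_eq_space Int_absorb2)
  have Xl: "X \<in> sets (lborel \<Otimes>\<^sub>M lborel)"
    using X by (subst lborel_prod) simp
  have ind1: "\<And>x y. indicator X (x,y) * indicator {0..1::real} y = (indicator X (x,y) :: ennreal)"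
    using sub by (auto simp: indicator_def)
  have ind2: "\<And>x. (\<integral>\<^sup>+ y. indicator X (x,y) \<partial>lborel) * indicator {0..1::real} x
       = (\<integral>\<^sup>+ y. indicator X (x,y) \<partial>lborel)"
  proof -
    fix x :: real
    show "?thesis x"
    proof (cases "x \<in> {0..1}")
      case False
      then have "\<And>y. indicator X (x,y) = (0::ennreal)" using sub by (auto simp: indicator_def)
      then show ?thesis by simp
    qed simp
  qed
  have "emeasure (unitI \<Otimes>\<^sub>M unitI) X = (\<integral>\<^sup>+ x. \<integral>\<^sup>+ y. indicator X (x, y) \<partial>unitI \<partial>unitI)"
    by (rule U.emeasure_pair_measure[OF XS])
  also have "\<dots> = (\<integral>\<^sup>+ x. (\<integral>\<^sup>+ y. indicator X (x,y) * indicator {0..1} y \<partial>lborel) * indicator {0..1} x \<partial>lborel)"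
    unfolding unitI_def by (simp add: nn_integral_restrict_space)
  also have "\<dots> = (\<integral>\<^sup>+ x. \<integral>\<^sup>+ y. indicator X (x, y) \<partial>lborel \<partial>lborel)"
    by (simp add: ind1 ind2)
  also have "\<dots> = emeasure (lborel \<Otimes>\<^sub>M lborel) X"
    by (rule lborel.emeasure_pair_measure[OF Xl, symmetric])
  also have "\<dots> = emeasure lborel X" by (simp add: lborel_prod)
  finally show ?thesis using XS by simp
qed

lemma bin_ent_meas: "bin_ent \<in> borel_measurable borel"
  unfolding bin_ent_def[abs_def] by measurable

lemma bin_ent_0[simp]: "bin_ent 0 = 0" and bin_ent_1[simp]: "bin_ent 1 = 0"
  by (simp_all add: bin_ent_def)

lemma bin_ent_sym: "bin_ent (1 - e) = bin_ent e"
  by (simp add: bin_ent_def algebra_simps)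

lemma xlnx_bound: fixes w :: real assumes "0 \<le> w" "w \<le> 1" shows "0 \<le> - w * ln w \<and> - w * ln w \<le> 1"
proof (cases "w = 0")
  case False
  then have w: "0 < w" using assms by auto
  have "ln w \<le> 0" using w assms by simp
  then have a: "0 \<le> - w * ln w" using w by (simp add: mult_nonneg_nonpos)
  have "ln (1/w) \<le> 1/w - 1" using w by (intro ln_le_minus_one) simp
  then have "- ln w \<le> 1/w - 1" using w by (simp add: ln_div)
  then have "w * (- ln w) \<le> w * (1/w - 1)" using w by (intro mult_left_mono) auto
  then have "- w * ln w \<le> 1 - w" using w by (simp add: algebra_simps)
  then show ?thesis using a assms by simp
qed simp

lemma bin_ent_bounds: assumes "0 \<le> w" "w \<le> 1" shows "0 \<le> bin_ent w \<and> bin_ent w \<le> 2"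
proof -
  have "bin_ent w = (- w * ln w) + (- (1-w) * ln (1-w))" by (simp add: bin_ent_def algebra_simps)
  then show ?thesis using xlnx_bound[of w] xlnx_bound[of "1 - w"] assms by linarith
qed

lemma bin_ent_lower: assumes "0 \<le> e" "e \<le> 1" shows "- e * ln e \<le> bin_ent e"
proof -
  have "bin_ent e = (- e * ln e) + (- (1-e) * ln (1-e))" by (simp add: bin_ent_def algebra_simps)
  then show ?thesis using xlnx_bound[of "1 - e"] assms by linarith
qed

lemma ent_integrable: assumes "graphon g"
  shows "integrable (unitI \<Otimes>\<^sub>M unitI) (\<lambda>(x,y). bin_ent (g x y))"
proof -
  interpret U: pair_prob_space unitI unitI
    by (simp add: pair_prob_space_def pair_sigma_finite_def prob_unitI prob_space_imp_sigma_finite)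
  show ?thesis
  proof (rule U.integrable_const_bound[where B=2])
    show "AE x in unitI \<Otimes>\<^sub>M unitI. norm ((\<lambda>(x,y). bin_ent (g x y)) x) \<le> 2"
      using assms bin_ent_bounds unfolding graphon_def
      by (intro AE_I2) (auto simp: space_pair_measure)
  qed (rule meas_M2[OF assms bin_ent_meas])
qed

lemma ent_le: assumes "graphon g" shows "graphon_entropy g \<le> 1"
proof -
  interpret U: pair_prob_space unitI unitI
    by (simp add: pair_prob_space_def pair_sigma_finite_def prob_unitI prob_space_imp_sigma_finite)
  have "integral\<^sup>L (unitI \<Otimes>\<^sub>M unitI) (\<lambda>(x,y). bin_ent (g x y)) \<le> integral\<^sup>L (unitI \<Otimes>\<^sub>M unitI) (\<lambda>_. 2)"
    using assms bin_ent_bounds unfolding graphon_def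
    by (intro integral_mono ent_integrable[OF assms]) (auto simp: space_pair_measure)
  also have "\<dots> = 2" using U.prob_space by simp
  finally show ?thesis unfolding graphon_entropy_def by simp
qed

definition pert :: "real \<Rightarrow> (real \<Rightarrow> real \<Rightarrow> real) \<Rightarrow> real \<Rightarrow> real \<Rightarrow> real" where
  "pert e g x y = (if g x y = 0 then e else if g x y = 1 then 1 - e else g x y)"

lemma pert_graphon: assumes g: "graphon g" and e: "0 \<le> e" "e \<le> 1"
  shows "graphon (pert e g)"
proof -
  have h: "(\<lambda>w::real. if w = 0 then e else if w = 1 then 1 - e else w) \<in> borel_measurable borel"
    by measurable
  have f: "(\<lambda>(x, y). g x y) \<in> borel_measurable (restrict_space borel ({0..1} \<times> {0..1}))"
    using g unfolding graphon_def by blast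
  have "(\<lambda>p. (\<lambda>w::real. if w = 0 then e else if w = 1 then 1 - e else w) ((\<lambda>(x, y). g x y) p))
        \<in> borel_measurable (restrict_space borel ({0..1} \<times> {0..1}))"
    by (rule measurable_compose[OF f h])
  then have "(\<lambda>(x, y). pert e g x y) \<in> borel_measurable (restrict_space borel ({0..1} \<times> {0..1}))"
    by (simp only: pert_def case_prod_unfold)
  then show ?thesis using g e unfolding graphon_def pert_def by auto
qed

lemma pert_close: assumes g: "graphon g" and e: "0 \<le> e" "e \<le> 1"
  shows "\<forall>x\<in>{0..1}. \<forall>y\<in>{0..1}. \<bar>pert e g x y - g x y\<bar> \<le> e"
  using e by (auto simp: pert_def)

lemma pert_entropy:
  assumes g: "graphon g" and e: "0 \<le> e" "e \<le> 1"
  defines "A \<equiv> {(x, y) \<in> {0..1::real} \<times> {0..1::real}. g x y \<in> {0, 1}}"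
  shows "graphon_entropy (pert e g) = graphon_entropy g + 1/2 * (bin_ent e * measure (unitI \<Otimes>\<^sub>M unitI) A)"
proof -
  let ?M = "unitI \<Otimes>\<^sub>M unitI"
  have pw: "\<And>p. p \<in> space ?M \<Longrightarrow> (\<lambda>(x,y). bin_ent (pert e g x y)) p
      = (\<lambda>(x,y). bin_ent (g x y)) p + bin_ent e * indicator A p"
    by (auto simp: pert_def A_def bin_ent_sym indicator_def space_pair_measure split: if_splits)
  have "integral\<^sup>L ?M (\<lambda>(x,y). bin_ent (pert e g x y))
      = integral\<^sup>L ?M (\<lambda>p. (\<lambda>(x,y). bin_ent (g x y)) p + bin_ent e * indicator A p)"
    using pw by (rule Bochner_Integration.integral_cong[OF refl])
  also have "\<dots> = integral\<^sup>L ?M (\<lambda>(x,y). bin_ent (g x y)) + bin_ent e * measure ?M A"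
  proof -
    have "A \<subseteq> space ?M" by (auto simp: A_def space_pair_measure)
    then have "measure ?M (A \<inter> space ?M) = measure ?M A" by (simp add: Int_absorb2)
    moreover have "integrable ?M (\<lambda>p. bin_ent e * indicator A p :: real)"
    proof (cases "bin_ent e = 0")
      case False
      have As: "A \<in> sets ?M"
      proof -
        have "(\<lambda>p. ext g p) \<in> borel_measurable ?M"
          using meas_M2[OF g, of "\<lambda>x. x"] by (rule measurable_cong[THEN iffD1, rotated])
               (auto simp: space_pair_measure ext_def)
        from measurable_sets[OF this, of "{0,1}"]
        have "ext g -` {0,1} \<inter> space ?M \<in> sets ?M" by simp
        also have "ext g -` {0,1} \<inter> space ?M = A"
          by (auto simp: A_def ext_def space_pair_measure)
        finally show ?thesis .
      qed
      interpret U: pair_prob_space unitI unitI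
        by (simp add: pair_prob_space_def pair_sigma_finite_def prob_unitI prob_space_imp_sigma_finite)
      show ?thesis using As by (intro integrable_mult_right integrable_real_indicator) (auto simp: less_top[symmetric] U.P.emeasure_finite)
    qed simp
    ultimately show ?thesis using ent_integrable[OF g] by simp
  qed
  finally show ?thesis unfolding graphon_entropy_def by (simp add: algebra_simps)
qed

lemma le_constr: assumes "graphon g" shows "graphon_entropy g \<le> constr_entropy Hs (dens_vec Hs g)"
  unfolding constr_entropy_def
  by (rule cSup_upper) (use assms ent_le in \<open>auto intro!: bdd_aboveI[where M=1]\<close>)

theorem theorem3p7:
  fixes Hs :: "'l::finite \<Rightarrow> sgraph"
    and \<tau>0 :: "real ^ 'l"
    and g0 :: "real \<Rightarrow> real \<Rightarrow> real"
  assumes "\<forall>k. simple_graph (Hs k)"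
    and "\<tau>0 \<in> interior (phase_space Hs)"
    and "constr_entropy Hs differentiable (at \<tau>0)"
    and "graphon g0"
    and "dens_vec Hs g0 = \<tau>0"
    and "graphon_entropy g0 = constr_entropy Hs \<tau>0"
  shows "{(x, y) \<in> {0..1::real} \<times> {0..1::real}. g0 x y \<in> {0, 1}} \<in> null_sets lebesgue"
proof (rule ccontr)
  define A where "A = {(x, y) \<in> {0..1::real} \<times> {0..1::real}. g0 x y \<in> {0, 1}}"
  let ?M = "unitI \<Otimes>\<^sub>M unitI"
  let ?s = "constr_entropy Hs"
  assume nn: "A \<notin> null_sets lebesgue"
  have g0: "graphon g0" by fact
  have Ab: "A \<in> sets borel"
  proof -
    have "ext g0 -` {0,1} \<inter> space borel \<in> sets borel"
      by (rule measurable_sets[OF ext_meas[OF g0]]) simp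
    then have "ext g0 -` {0,1} \<inter> ({0..1} \<times> {0..1}) \<in> sets borel"
      by (intro sets.Int) (auto intro!: borel_closed closed_Times)
    also have "ext g0 -` {0,1} \<inter> ({0..1} \<times> {0..1}) = A"
      by (auto simp: A_def ext_def)
    finally show ?thesis .
  qed
  have Asub: "A \<subseteq> {0..1} \<times> {0..1}" by (auto simp: A_def)
  have "emeasure lborel A \<noteq> 0"
  proof
    assume "emeasure lborel A = 0"
    then have "A \<in> null_sets lborel" using Ab by (simp add: null_sets_def)
    then show False using nn null_sets_completionI by blast
  qed
  with emeas_link[OF Asub Ab] have "emeasure ?M A \<noteq> 0" by simp
  interpret U: pair_prob_space unitI unitI
    by (simp add: pair_prob_space_def pair_sigma_finite_def prob_unitI prob_space_imp_sigma_finite)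
  have mpos: "measure ?M A > 0"
    using \<open>emeasure ?M A \<noteq> 0\<close> U.P.emeasure_eq_measure[of A]
    by (simp add: zero_less_measure_iff)
  define m where "m = measure ?M A"
  have m: "m > 0" using mpos m_def by simp
  obtain D where D: "(?s has_derivative D) (at \<tau>0)"
    using assms(3) unfolding differentiable_def by blast
  then have bl: "bounded_linear D"
    and dd: "\<forall>e>0. \<exists>d>0. \<forall>y. norm(y - \<tau>0) < d \<longrightarrow> norm (?s y - ?s \<tau>0 - D (y - \<tau>0)) \<le> e * norm (y - \<tau>0)"
    unfolding has_derivative_at_alt by auto
  obtain K0 where K0: "K0 > 0" "\<And>x. norm (D x) \<le> norm x * K0"
    using bounded_linear.pos_bounded[OF bl] by blast
  obtain d where d: "d > 0" "\<And>y. norm(y - \<tau>0) < d \<Longrightarrow> norm (?s y - ?s \<tau>0 - D (y - \<tau>0)) \<le> 1 * norm (y - \<tau>0)"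
    using dd[rule_format, of 1] by auto
  define L where "L = 1 + K0"
  have Lb: "\<And>y. norm(y - \<tau>0) < d \<Longrightarrow> ?s y - ?s \<tau>0 \<le> L * norm (y - \<tau>0)"
  proof -
    fix y assume "norm(y - \<tau>0) < d"
    from d(2)[OF this] K0(2)[of "y - \<tau>0"]
    show "?s y - ?s \<tau>0 \<le> L * norm (y - \<tau>0)" unfolding L_def
      by (simp add: algebra_simps)
  qed
  have L: "L > 0" using K0 L_def by simp
  define C where "C = (\<Sum>k\<in>UNIV. real (card (snd (Hs k))))"
  have C: "C \<ge> 0" unfolding C_def by (simp add: sum_nonneg)
  define X where "X = 2 * L * (C + 1) / m + 1"
  define e where "e = min (1/2) (min (d / (2 * (C + 1))) (exp (- X)))"
  have e0: "e > 0" using d C by (simp add: e_def)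
  have e1: "e \<le> 1/2" unfolding e_def by linarith
  have ed: "(C + 1) * e \<le> d / 2"
  proof -
    have "e \<le> d / (2 * (C + 1))" by (simp add: e_def)
    then show ?thesis using C by (simp add: field_simps)
  qed
  have eX: "- ln e \<ge> X"
  proof -
    have "e \<le> exp (- X)" by (simp add: e_def)
    then have "ln e \<le> ln (exp (- X))" using e0 by (subst ln_le_cancel_iff) auto
    then show ?thesis by simp
  qed
  define g where "g = pert e g0"
  have g: "graphon g" unfolding g_def using pert_graphon[OF g0] e0 e1 by simp
  have close: "\<forall>x\<in>{0..1}. \<forall>y\<in>{0..1}. \<bar>g x y - g0 x y\<bar> \<le> e"
    unfolding g_def using pert_close[OF g0] e0 e1 by simp
  define \<tau> where "\<tau> = dens_vec Hs g"
  have nrm: "norm (\<tau> - \<tau>0) \<le> C * e"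
  proof -
    have "norm (\<tau> - \<tau>0) \<le> (\<Sum>k\<in>UNIV. \<bar>(\<tau> - \<tau>0) $ k\<bar>)" by (rule norm_le_l1_cart)
    also have "\<dots> \<le> (\<Sum>k\<in>UNIV. real (card (snd (Hs k))) * e)"
    proof (rule sum_mono)
      fix k
      show "\<bar>(\<tau> - \<tau>0) $ k\<bar> \<le> real (card (snd (Hs k))) * e"
        unfolding assms(5)[symmetric] \<tau>_def dens_vec_def
        using hom_lip[OF _ g g0 _ close, of "Hs k"] assms(1) e0 by simp
    qed
    also have "\<dots> = C * e" by (simp add: C_def sum_distrib_right)
    finally show ?thesis .
  qed
  have "C * e \<le> (C + 1) * e" using e0 by (simp add: algebra_simps)
  then have "norm (\<tau> - \<tau>0) < d" using nrm ed d by linarith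
  moreover have "L * norm (\<tau> - \<tau>0) \<le> L * (C * e)"
    using mult_left_mono[OF nrm, of L] L by simp
  ultimately have up: "?s \<tau> - ?s \<tau>0 \<le> L * (C * e)"
    using Lb[of \<tau>] by linarith
  have low: "?s \<tau> \<ge> ?s \<tau>0 + 1/2 * (bin_ent e * m)"
    using le_constr[OF g, of Hs] pert_entropy[OF g0, of e] e0 e1 assms(6)
    unfolding \<tau>_def g_def m_def A_def by simp
  have "1/2 * (bin_ent e * m) \<le> L * (C * e)" using up low by simp
  moreover have "bin_ent e \<ge> e * X"
    using bin_ent_lower[of e] e0 e1 eX mult_left_mono[OF eX, of e] by simp
  ultimately have "1/2 * (e * X * m) \<le> L * (C * e)"
    using mult_right_mono[of "e * X" "bin_ent e" m] m by linarith
  then have "X * m \<le> 2 * L * C" using e0 by (simp add: field_simps)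
  moreover have "X * m = 2 * L * (C + 1) + m" using m by (simp add: X_def field_simps)
  ultimately show False using m L by (simp add: algebra_simps)
qed

end
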